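(* Let $K$ be an arbitrary field, $E$ an $n$-dimensional $K$-vector space ($n\ge1$), and $m=\lfloor n/2\rfloor+1$. Then $\bigwedge^mE\otimes\bigwedge^{n-m}E$ is spanned by the images of the maps $\psi(r,m)$, $1\le r\le m$.
   Context: For $1\le r\le m$, $\psi(r,m):\bigwedge^{m-r}E\otimes\bigwedge^{n-m+r}E\to\bigwedge^mE\otimes\bigwedge^{n-m}E$ is the composition of $1\otimes\Delta:\bigwedge^{m-r}E\otimes\bigwedge^{n-m+r}E\to\bigwedge^{m-r}E\otimes\bigwedge^rE\otimes\bigwedge^{n-m}E$, where $\Delta:\bigwedge^{n-m+r}E\to\bigwedge^rE\otimes\bigwedge^{n-m}E$ is the component of the comultiplication of the exterior algebra (i.e. $\Delta(v_1\wedge\dots\wedge v_k)=\sum_{S}\pm v_S\otimes v_{S^c}$ over $r$-element subsets $S\subset[1,k]$ with the shuffle sign), followed by exterior multiplication $\bigwedge^{m-r}E\otimes\bigwedge^rE\to\bigwedge^mE$ on the first two factors. *)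

theory Defs
  imports Complex_Main "HOL-Library.Function_Algebras"
begin

text \<open>E = K^n with basis e_0,...,e_(n-1). The k-th exterior power
has basis e_S = e_(s_1) wedge ... wedge e_(s_k) for S a k-subset of {0..<n}
with s_1 < ... < s_k. An element of (wedge^a E) tensor (wedge^b E) is a
coefficient function on pairs (S,T), with coefficient of e_S tensor e_T.\<close>

definition ext_tensor :: "nat \<Rightarrow> nat \<Rightarrow> nat \<Rightarrow> ((nat set \<times> nat set) \<Rightarrow> 'a::field) set" where
  "ext_tensor n a b = {f. \<forall>S T. f (S, T) \<noteq> 0 \<longrightarrow>
       S \<subseteq> {..<n} \<and> card S = a \<and> T \<subseteq> {..<n} \<and> card T = b}"

text \<open>Sign with e_S wedge e_U = wsign S U * e_(S union U) for disjoint finite S, U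
(number of inversions: pairs s in S, u in U with s > u).\<close>
definition wsign :: "nat set \<Rightarrow> nat set \<Rightarrow> 'a::field" where
  "wsign S U = (-1) ^ card {(s, u). s \<in> S \<and> u \<in> U \<and> u < s}"

text \<open>Coefficient of e_A tensor e_B in psi(r,m)(e_S tensor e_T).
Delta(e_T) = sum over r-subsets U of T of wsign U (T-U) * e_U tensor e_(T-U);
then e_S wedge e_U = 0 if S meets U, else wsign S U * e_(S union U).\<close>
definition psi_coeff :: "nat \<Rightarrow> nat set \<Rightarrow> nat set \<Rightarrow> nat set \<Rightarrow> nat set \<Rightarrow> 'a::field" where
  "psi_coeff r S T A B =
     (let U = T - B in
      if B \<subseteq> T \<and> card U = r \<and> S \<inter> U = {} \<and> A = S \<union> U
      then wsign U B * wsign S U else 0)"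

definition psi :: "nat \<Rightarrow> nat \<Rightarrow> nat \<Rightarrow> ((nat set \<times> nat set) \<Rightarrow> 'a::field)
                     \<Rightarrow> ((nat set \<times> nat set) \<Rightarrow> 'a)" where
  "psi n r m f = (\<lambda>(A, B).
     (\<Sum>(S, T) \<in> {S. S \<subseteq> {..<n} \<and> card S = m - r} \<times> {T. T \<subseteq> {..<n} \<and> card T = n - m + r}.
        f (S, T) * psi_coeff r S T A B))"

abbreviation kspan :: "((nat set \<times> nat set) \<Rightarrow> 'a::field) set \<Rightarrow> ((nat set \<times> nat set) \<Rightarrow> 'a) set" where
  "kspan X \<equiv> module.span (\<lambda>c f x. c * f x) X"

end

theory Submission
  imports Defs
begin

lemma fsum_apply: "(\<Sum>i\<in>I. f i) x = (\<Sum>i\<in>I. f i x)"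
  by (induction I rule: infinite_finite_induct) auto

lemma kmod: "module (\<lambda>(c::'a::field) (f::'b \<Rightarrow> 'a) x. c * f x)"
  by unfold_locales (auto simp: fun_eq_iff algebra_simps)

lemma wsign_sq: "wsign S U * wsign S U = (1::'a::field)"
  unfolding wsign_def by (simp add: power_mult_distrib[symmetric])

lemma wsign_un_left:
  assumes "X \<inter> Y = {}" "finite X" "finite Y" "finite Z"
  shows "(wsign (X \<union> Y) Z :: 'a::field) = wsign X Z * wsign Y Z"
proof -
  have e: "{(s, u). s \<in> X \<union> Y \<and> u \<in> Z \<and> u < s} = {(s, u). s \<in> X \<and> u \<in> Z \<and> u < s} \<union> {(s, u). s \<in> Y \<and> u \<in> Z \<and> u < s}" by auto
  have f1: "finite {(s, u). s \<in> X \<and> u \<in> Z \<and> u < s}"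
    by (rule finite_subset[of _ "X \<times> Z"]) (use assms in auto)
  have f2: "finite {(s, u). s \<in> Y \<and> u \<in> Z \<and> u < s}"
    by (rule finite_subset[of _ "Y \<times> Z"]) (use assms in auto)
  show ?thesis unfolding wsign_def e
    by (subst card_Un_disjoint) (use f1 f2 assms in \<open>auto simp: power_add\<close>)
qed

lemma wsign_un_right:
  assumes "X \<inter> Y = {}" "finite X" "finite Y" "finite Z"
  shows "(wsign Z (X \<union> Y) :: 'a::field) = wsign Z X * wsign Z Y"
proof -
  have e: "{(s, u). s \<in> Z \<and> u \<in> X \<union> Y \<and> u < s} = {(s, u). s \<in> Z \<and> u \<in> X \<and> u < s} \<union> {(s, u). s \<in> Z \<and> u \<in> Y \<and> u < s}" by auto
  have f1: "finite {(s, u). s \<in> Z \<and> u \<in> X \<and> u < s}"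
    by (rule finite_subset[of _ "Z \<times> X"]) (use assms in auto)
  have f2: "finite {(s, u). s \<in> Z \<and> u \<in> Y \<and> u < s}"
    by (rule finite_subset[of _ "Z \<times> Y"]) (use assms in auto)
  show ?thesis unfolding wsign_def e
    by (subst card_Un_disjoint) (use f1 f2 assms in \<open>auto simp: power_add\<close>)
qed

lemma wsign_swap:
  assumes "X \<inter> Y = {}" "finite X" "finite Y"
  shows "(wsign X Y :: 'a::field) * wsign Y X = (-1) ^ (card X * card Y)"
proof -
  let ?L = "{(s, u). s \<in> X \<and> u \<in> Y \<and> u < s}"
  let ?R = "{(s, u). s \<in> X \<and> u \<in> Y \<and> s < u}"
  have im: "{(s, u). s \<in> Y \<and> u \<in> X \<and> u < s} = prod.swap ` ?R"
    by (auto simp: image_iff)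
  have c1: "card {(s, u). s \<in> Y \<and> u \<in> X \<and> u < s} = card ?R"
    unfolding im by (rule card_image) (simp add: swap_inj_on)
  have u: "?L \<union> ?R = X \<times> Y" using assms by auto
  have d: "?L \<inter> ?R = {}" by auto
  have f: "finite ?L" "finite ?R"
    by (rule finite_subset[of _ "X \<times> Y"], use assms in auto)+
  have "card ?L + card ?R = card (X \<times> Y)"
    unfolding u[symmetric] by (rule card_Un_disjoint[symmetric, OF f d])
  then have "card ?L + card {(s, u). s \<in> Y \<and> u \<in> X \<and> u < s} = card X * card Y"
    unfolding c1 card_cartesian_product .
  then show ?thesis unfolding wsign_def by (simp only: power_add[symmetric])
qed

lemma altsum: "finite I \<Longrightarrow> I \<noteq> {} \<Longrightarrow> (\<Sum>V\<in>Pow I. (-1::'a::ring_1) ^ card V) = 0"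
proof (induction I rule: finite_induct)
  case empty then show ?case by simp
next
  case (insert x F)
  have d: "Pow F \<inter> insert x ` Pow F = {}" using insert(2) by blast
  have i: "inj_on (insert x) (Pow F)"
  proof (rule inj_onI)
    fix a b assume ab: "a \<in> Pow F" "b \<in> Pow F" "insert x a = insert x b"
    then have "x \<notin> a" "x \<notin> b" using insert(2) by blast+
    then show "a = b" using ab(3) insert_ident by metis
  qed
  have fP: "finite (Pow F)" "finite (insert x ` Pow F)" using insert(1) by simp_all
  have "(\<Sum>V\<in>Pow (insert x F). (-1::'a) ^ card V) = (\<Sum>V\<in>Pow F. (-1::'a) ^ card V) + (\<Sum>V\<in>insert x ` Pow F. (-1::'a) ^ card V)"
    unfolding Pow_insert by (rule sum.union_disjoint[OF fP d])
  also have "(\<Sum>V\<in>insert x ` Pow F. (-1::'a) ^ card V) = (\<Sum>V\<in>Pow F. - ((-1::'a) ^ card V))"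
  proof (subst sum.reindex[OF i], rule sum.cong[OF refl])
    fix V assume "V \<in> Pow F"
    then have "x \<notin> V" "finite V" using insert(1,2) finite_subset by blast+
    then show "((\<lambda>V. (-1::'a) ^ card V) \<circ> insert x) V = - ((-1::'a) ^ card V)" by simp
  qed
  finally show ?case by (simp add: sum_negf)
qed

definition delta :: "nat set \<times> nat set \<Rightarrow> nat set \<times> nat set \<Rightarrow> 'a::field" where
  "delta x y = (if y = x then 1 else 0)"

lemma finite_ksets: "finite {S. S \<subseteq> {..<(n::nat)} \<and> card S = k}"
  by (rule finite_subset[of _ "Pow {..<n}"]) auto

lemma psi_delta:
  assumes "S \<subseteq> {..<n}" "card S = m - r" "T \<subseteq> {..<n}" "card T = n - m + r"
  shows "(psi n r m (delta (S,T)) (A,B) :: 'a::field) = psi_coeff r S T A B"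
proof -
  have "psi n r m (delta (S,T)) (A,B) = (\<Sum>x\<in>{S. S \<subseteq> {..<n} \<and> card S = m - r} \<times> {T. T \<subseteq> {..<n} \<and> card T = n - m + r}.
        (if x = (S,T) then (psi_coeff r S T A B :: 'a) else 0))"
    unfolding psi_def by (simp only: prod.case) (rule sum.cong[OF refl], auto simp: delta_def split: prod.splits)
  also have "\<dots> = psi_coeff r S T A B"
    by (subst sum.delta) (use assms finite_ksets in auto)
  finally show ?thesis .
qed

definition Hf :: "nat set \<Rightarrow> nat set \<Rightarrow> nat set \<Rightarrow> nat \<Rightarrow> nat set \<times> nat set \<Rightarrow> 'a::field" where
  "Hf C W V p = (\<lambda>(A', B'). if V \<subseteq> A' - B' \<and> A' \<inter> B' = C \<and> A' \<union> B' = W \<and> card (A' - B') = p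
      then wsign (A' - B') (B' - A') else 0)"

lemma cond_equiv:
  assumes "finite W" "C \<subseteq> W" "V \<subseteq> W - C" "card V + r = p"
  shows "(B' \<subseteq> W - V \<and> card ((W - V) - B') = r \<and> (C \<union> V) \<inter> ((W - V) - B') = {} \<and> A' = (C \<union> V) \<union> ((W - V) - B'))
     \<longleftrightarrow> (V \<subseteq> A' - B' \<and> A' \<inter> B' = C \<and> A' \<union> B' = W \<and> card (A' - B') = p)"
proof
  assume h: "B' \<subseteq> W - V \<and> card ((W - V) - B') = r \<and> (C \<union> V) \<inter> ((W - V) - B') = {} \<and> A' = (C \<union> V) \<union> ((W - V) - B')"
  have e: "A' - B' = V \<union> ((W - V) - B')" using h assms by blast
  have fV: "finite V" using assms(1,3) by (meson finite_Diff finite_subset)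
  have "card (A' - B') = card V + card ((W - V) - B')"
    unfolding e by (rule card_Un_disjoint) (use assms fV in auto)
  then show "V \<subseteq> A' - B' \<and> A' \<inter> B' = C \<and> A' \<union> B' = W \<and> card (A' - B') = p"
    using h assms by (auto simp: e)
next
  assume h: "V \<subseteq> A' - B' \<and> A' \<inter> B' = C \<and> A' \<union> B' = W \<and> card (A' - B') = p"
  have e: "(W - V) - B' = (A' - B') - V" using h by blast
  have "finite (A' - B')" using h assms by (metis finite_Diff finite_Un)
  then have "card ((A' - B') - V) = p - card V" using h by (subst card_Diff_subset) (auto intro: finite_subset)
  then show "B' \<subseteq> W - V \<and> card ((W - V) - B') = r \<and> (C \<union> V) \<inter> ((W - V) - B') = {} \<and> A' = (C \<union> V) \<union> ((W - V) - B')"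
    using h assms unfolding e by auto
qed

lemma key_coeff:
  assumes "finite W" "C \<subseteq> W" "V \<subseteq> W - C" "card V + r = p"
  shows "(psi_coeff r (C \<union> V) (W - V) A' B' :: 'a::field) =
     (-1) ^ (r * card C) * wsign V (W - C - V) * Hf C W V p (A', B')"
proof (cases "B' \<subseteq> W - V \<and> card ((W - V) - B') = r \<and> (C \<union> V) \<inter> ((W - V) - B') = {} \<and> A' = (C \<union> V) \<union> ((W - V) - B')")
  case False
  then show ?thesis using cond_equiv[OF assms, of B' A'] unfolding psi_coeff_def Hf_def Let_def by auto
next
  case True
  note h = True
  have h2: "V \<subseteq> A' - B' \<and> A' \<inter> B' = C \<and> A' \<union> B' = W \<and> card (A' - B') = p"
    using cond_equiv[OF assms, of B' A'] h by blast
  define U where "U = (W - V) - B'"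
  define Y where "Y = B' - C"
  have fin: "finite C" "finite V" "finite U" "finite Y" "finite B'"
    using assms h2 unfolding U_def Y_def by (auto intro: finite_subset)
  have s1: "B' = C \<union> Y" "C \<inter> Y = {}" "C \<inter> U = {}" "V \<inter> U = {}" "V \<inter> Y = {}" "U \<inter> Y = {}"
    "A' - B' = V \<union> U" "B' - A' = Y" "W - C - V = U \<union> Y"
    using h h2 assms unfolding U_def Y_def by blast+
  have cU: "card U = r" using h unfolding U_def by simp
  have a1: "wsign U B' = wsign U C * (wsign U Y :: 'a)"
    unfolding s1(1) by (rule wsign_un_right) (use s1 fin in auto)
  have a2: "wsign (C \<union> V) U = wsign C U * (wsign V U :: 'a)"
    by (rule wsign_un_left) (use s1 fin in auto)
  have L: "wsign U B' * wsign (C \<union> V) U = (wsign U C * wsign C U) * (wsign U Y * (wsign V U :: 'a))"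
    unfolding a1 a2 by (simp add: ac_simps)
  have L2: "wsign U C * wsign C U = ((-1) ^ (r * card C) :: 'a)"
    using wsign_swap[of U C] s1 fin cU by (auto simp: Int_commute)
  have b1: "wsign V (W - C - V) = wsign V U * (wsign V Y :: 'a)"
    unfolding s1(9) by (rule wsign_un_right) (use s1 fin in auto)
  have b2: "wsign (A' - B') (B' - A') = wsign V Y * (wsign U Y :: 'a)"
    unfolding s1(7,8) by (rule wsign_un_left) (use s1 fin in auto)
  have R: "wsign V (W - C - V) * wsign (A' - B') (B' - A') = (wsign V Y * wsign V Y) * (wsign V U * (wsign U Y :: 'a))"
    unfolding b1 b2 by (simp add: ac_simps)
  have "(psi_coeff r (C \<union> V) (W - V) A' B' :: 'a) = wsign U B' * wsign (C \<union> V) U"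
    using h unfolding psi_coeff_def Let_def U_def by simp
  also have "\<dots> = (-1) ^ (r * card C) * (wsign V (W - C - V) * wsign (A' - B') (B' - A'))"
    unfolding L L2 R wsign_sq by (simp add: ac_simps)
  also have "\<dots> = (-1) ^ (r * card C) * wsign V (W - C - V) * Hf C W V p (A', B')"
    using h2 unfolding Hf_def by simp
  finally show ?thesis .
qed

lemma delta_in_span:
  fixes n m :: nat
  assumes "n \<ge> 1" and "m = n div 2 + 1"
    and AB: "A \<subseteq> {..<n}" "card A = m" "B \<subseteq> {..<n}" "card B = n - m"
  shows "(delta (A, B) :: _ \<Rightarrow> 'a::field) \<in> kspan (\<Union>r\<in>{1..m}. psi n r m ` (ext_tensor n (m - r) (n - m + r) :: ((nat set \<times> nat set) \<Rightarrow> 'a::field) set))"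
    (is "_ \<in> kspan ?K")
proof -
  interpret M: module "\<lambda>(c::'a) (f::nat set \<times> nat set \<Rightarrow> 'a) x. c * f x" by (rule kmod)
  define C where "C = A \<inter> B"
  define W where "W = A \<union> B"
  define P where "P = A - B"
  define p where "p = card P"
  define c where "c = card C"
  define g0 where "g0 = (wsign P (B - A) :: 'a)"
  have fA: "finite A" "finite B" using AB finite_subset by auto
  have mn: "m \<le> n" "n < 2 * m" using assms(1,2) by auto
  have cA: "c + p = m" unfolding c_def p_def C_def P_def using AB(2) fA
    using card_Int_Diff[OF fA(1), of B] by simp
  have cW: "card W + c = n" unfolding W_def c_def C_def using card_Un_Int[OF fA] AB mn by simp
  have cB: "c \<le> n - m" unfolding c_def C_def using AB(4) card_mono[OF fA(2), of "A \<inter> B"] by simp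
  have pp: "p \<ge> 1" using cA cB mn by linarith
  have fW: "finite W" unfolding W_def using fA by simp
  have CW: "C \<subseteq> W" unfolding C_def W_def by auto
  have PWC: "P \<subseteq> W - C" unfolding P_def C_def W_def by auto
  have fP: "finite P" using fA unfolding P_def by simp
  define H where "H V = (Hf C W V p :: _ \<Rightarrow> 'a)" for V
  have HK: "H V \<in> kspan ?K" if V: "V \<subset> P" for V
  proof -
    define r where "r = p - card V"
    have cV: "card V < p" unfolding p_def using V fP by (simp add: psubset_card_mono)
    have VWC: "V \<subseteq> W - C" using V PWC by auto
    have r1: "r \<in> {1..m}" unfolding r_def using cV cA by auto
    have eq1: "card V + r = p" unfolding r_def using cV by simp
    have Ssub: "C \<union> V \<subseteq> {..<n}" "W - V \<subseteq> {..<n}" using AB VWC unfolding C_def W_def by auto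
    have fV: "finite V" using VWC fW finite_subset by blast
    have cS: "card (C \<union> V) = m - r"
    proof -
      have "card (C \<union> V) = card C + card V"
        by (rule card_Un_disjoint) (use fV fW CW VWC finite_subset in auto)
      then show ?thesis using cA eq1 unfolding c_def by simp
    qed
    have cT: "card (W - V) = n - m + r"
    proof -
      have "card (W - V) = card W - card V" using card_Diff_subset[of V W] fV VWC by auto
      then show ?thesis using cW cA eq1 mn by arith
    qed
    define eps where "eps = (-1) ^ (r * card C) * (wsign V (W - C - V) :: 'a)"
    have ee: "eps * eps = 1"
    proof -
      have "eps * eps = ((-1) ^ (r * card C) * (-1) ^ (r * card C)) * (wsign V (W - C - V) * (wsign V (W - C - V) :: 'a))"
        unfolding eps_def by (simp only: ac_simps)
      then show ?thesis by (simp only: wsign_sq minus_one_mult_self mult_1_right)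
    qed
    have "delta (C \<union> V, W - V) \<in> (ext_tensor n (m - r) (n - m + r) :: (_ \<Rightarrow> 'a) set)"
      unfolding ext_tensor_def delta_def using Ssub cS cT by auto
    then have "psi n r m (delta (C \<union> V, W - V)) \<in> ?K" using r1 by blast
    then have "(\<lambda>x. eps * psi n r m (delta (C \<union> V, W - V)) x) \<in> kspan ?K"
      by (intro M.span_scale M.span_base)
    moreover have "(\<lambda>x. eps * psi n r m (delta (C \<union> V, W - V)) x) = H V"
    proof
      fix x :: "nat set \<times> nat set"
      obtain A' B' where x: "x = (A', B')" by fastforce
      have "psi n r m (delta (C \<union> V, W - V)) x = eps * H V x"
        unfolding x psi_delta[OF Ssub(1) cS Ssub(2) cT] key_coeff[OF fW CW VWC eq1]
        by (simp add: eps_def H_def c_def)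
      then show "eps * psi n r m (delta (C \<union> V, W - V)) x = H V x"
        using ee by (simp add: mult.assoc[symmetric])
    qed
    ultimately show ?thesis by simp
  qed
  have finV: "finite {V. V \<subset> P}" by (rule finite_subset[of _ "Pow P"]) (use fP in auto)
  define kap where "kap = - ((-1) ^ p * g0)"
  have main: "delta (A, B) = (\<Sum>V\<in>{V. V \<subset> P}. (\<lambda>x. (kap * (-1) ^ card V) * H V x))"
  proof
    fix x :: "nat set \<times> nat set"
    obtain A' B' where x: "x = (A', B')" by fastforce
    show "delta (A, B) x = (\<Sum>V\<in>{V. V \<subset> P}. (\<lambda>x. (kap * (-1) ^ card V) * H V x)) x"
    proof (cases "A' \<inter> B' = C \<and> A' \<union> B' = W \<and> card (A' - B') = p")
      case False
      then have "x \<noteq> (A, B)" unfolding x C_def W_def p_def P_def by auto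
      moreover have z: "\<And>V. H V x = 0" using False unfolding H_def Hf_def x by auto
      ultimately show ?thesis unfolding fsum_apply delta_def by simp
    next
      case True
      define P' where "P' = A' - B'"
      define w' where "w' = (wsign P' (B' - A') :: 'a)"
      have "(\<Sum>V\<in>{V. V \<subset> P}. (\<lambda>x. (kap * (-1) ^ card V) * H V x)) x
          = (\<Sum>V\<in>{V. V \<subset> P}. (if V \<subseteq> P' then kap * w' * (-1) ^ card V else 0))"
        unfolding fsum_apply x H_def Hf_def P'_def w'_def using True by (intro sum.cong refl) (auto simp: ac_simps)
      also have "\<dots> = kap * w' * (\<Sum>V\<in>{V. V \<subset> P \<and> V \<subseteq> P'}. (-1) ^ card V)"
        by (subst sum.inter_filter[symmetric]) (auto simp: finV sum_distrib_left)
      finally have eqs: "(\<Sum>V\<in>{V. V \<subset> P}. (\<lambda>x. (kap * (-1) ^ card V) * H V x)) x = kap * w' * (\<Sum>V\<in>{V. V \<subset> P \<and> V \<subseteq> P'}. (-1) ^ card V)" .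
      show ?thesis
      proof (cases "P' = P")
        case True2: True
        have "A' = A" "B' = B" using True True2 unfolding P'_def P_def C_def W_def by blast+
        then have w0: "w' = g0" unfolding w'_def g0_def P'_def P_def by simp
        have se: "{V. V \<subset> P \<and> V \<subseteq> P'} = Pow P - {P}" using True2 by auto
        have Pne: "P \<noteq> {}" using pp fP unfolding p_def by auto
        have "(\<Sum>V\<in>Pow P - {P}. (-1::'a) ^ card V) = (\<Sum>V\<in>Pow P. (-1::'a) ^ card V) - (-1) ^ card P"
          by (subst sum_diff1) (use fP in auto)
        then have "(\<Sum>V\<in>{V. V \<subset> P \<and> V \<subseteq> P'}. (-1::'a) ^ card V) = 0 - (-1) ^ p"
          unfolding se p_def altsum[OF fP Pne] .
        then show ?thesis unfolding eqs using \<open>A' = A\<close> \<open>B' = B\<close> x w0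
          by (simp add: delta_def kap_def g0_def wsign_sq algebra_simps flip: power_add power_mult_distrib)
      next
        case False2: False
        then have xn: "x \<noteq> (A, B)" unfolding x P'_def P_def by auto
        define I where "I = P \<inter> P'"
        have fP': "finite P'" "P' \<subseteq> W - C" "card P' = p" using True fW unfolding P'_def by (auto intro: finite_subset)
        have IP: "I \<noteq> P"
        proof
          assume "I = P"
          then have "P \<subseteq> P'" unfolding I_def by auto
          then have "P = P'" using fP' p_def by (simp add: card_subset_eq)
          then show False using False2 by simp
        qed
        have Ine: "I \<noteq> {}"
        proof
          assume "I = {}"
          then have "card (P \<union> P') = p + p" using card_Un_disjoint[OF fP fP'(1)] fP' p_def I_def by simp
          moreover have "card (P \<union> P') \<le> card (W - C)" using PWC fP'(2) fW by (intro card_mono) auto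
          moreover have "card (W - C) = card W - c" using CW fW unfolding c_def by (simp add: card_Diff_subset finite_subset)
          ultimately show False using cW cA mn pp by arith
        qed
        have "{V. V \<subset> P \<and> V \<subseteq> P'} = Pow I" using IP unfolding I_def by auto
        then have "(\<Sum>V\<in>{V. V \<subset> P \<and> V \<subseteq> P'}. (-1::'a) ^ card V) = 0"
          using altsum[of I] Ine fP unfolding I_def by auto
        then show ?thesis unfolding eqs using xn by (simp add: delta_def)
      qed
    qed
  qed
  show ?thesis unfolding main
    by (intro M.span_sum M.span_scale[of _ _ "kap * (-1) ^ card _", simplified] HK) auto
qed

theorem lemma5:
  fixes n m :: nat
  assumes "n \<ge> 1" and "m = n div 2 + 1"
  shows "kspan (\<Union>r\<in>{1..m}. psi n r m ` (ext_tensor n (m - r) (n - m + r) :: ((nat set \<times> nat set) \<Rightarrow> 'a::field) set))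
         = ext_tensor n m (n - m)"
  (is "kspan ?K = ?E")
proof -
  interpret M: module "\<lambda>(c::'a) (f::nat set \<times> nat set \<Rightarrow> 'a) x. c * f x" by (rule kmod)
  have sub: "M.subspace ?E"
  proof (rule M.subspaceI)
    show "0 \<in> ?E" unfolding ext_tensor_def by simp
  next
    fix x y assume "x \<in> ?E" "y \<in> ?E"
    then show "x + y \<in> ?E" unfolding ext_tensor_def
      by (smt (verit, best) add.right_neutral mem_Collect_eq plus_fun_apply add_0)
  next
    fix c x assume xE: "x \<in> ?E"
    show "(\<lambda>xa. c * x xa) \<in> ?E" unfolding ext_tensor_def
    proof (intro CollectI allI impI)
      fix S T assume "c * x (S, T) \<noteq> 0"
      then have "x (S, T) \<noteq> 0" by auto
      then show "S \<subseteq> {..<n} \<and> card S = m \<and> T \<subseteq> {..<n} \<and> card T = n - m"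
        using xE unfolding ext_tensor_def by blast
    qed
  qed
  have KE: "?K \<subseteq> ?E"
  proof
    fix g assume "g \<in> ?K"
    then obtain r f where r: "r \<in> {1..m}" and g: "g = psi n r m f" by blast
    show "g \<in> ?E" unfolding ext_tensor_def
    proof (intro CollectI allI impI)
      fix A B assume nz: "g (A, B) \<noteq> 0"
      then obtain S T where ST: "S \<subseteq> {..<n}" "card S = m - r" "T \<subseteq> {..<n}" "card T = n - m + r"
        and pc: "psi_coeff r S T A B \<noteq> (0::'a)"
        unfolding g psi_def by (auto elim!: sum.not_neutral_contains_not_neutral)
      let ?U = "T - B"
      have c: "B \<subseteq> T" "card ?U = r" "S \<inter> ?U = {}" "A = S \<union> ?U"
        using pc unfolding psi_coeff_def Let_def by (auto split: if_splits)
      have fT: "finite T" "finite S" using ST finite_subset by auto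
      have "card A = card S + card ?U" using c fT by (simp add: card_Un_disjoint)
      moreover have "card B = card T - card ?U"
      proof -
        have "B = T - ?U" using c by blast
        moreover have "card (T - ?U) = card T - card ?U" using fT by (intro card_Diff_subset) auto
        ultimately show ?thesis by simp
      qed
      ultimately show "A \<subseteq> {..<n} \<and> card A = m \<and> B \<subseteq> {..<n} \<and> card B = n - m"
        using c ST r by auto
    qed
  qed
  show ?thesis
  proof
    show "kspan ?K \<subseteq> ?E" by (rule M.span_minimal[OF KE sub])
  next
    show "?E \<subseteq> kspan ?K"
    proof
      fix f assume f: "f \<in> ?E"
      let ?I = "{A. A \<subseteq> {..<n} \<and> card A = m} \<times> {B. B \<subseteq> {..<n} \<and> card B = n - m}"
      have fin: "finite ?I" using finite_ksets by auto
      have "f = (\<Sum>x\<in>?I. (\<lambda>y. f x * delta x y))"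
      proof
        fix y :: "nat set \<times> nat set"
        have "(\<Sum>x\<in>?I. (\<lambda>y. f x * delta x y)) y = (\<Sum>x\<in>?I. if y = x then f x else 0)"
          unfolding fsum_apply delta_def by (intro sum.cong refl) auto
        also have "\<dots> = (if y \<in> ?I then f y else 0)" by (rule sum.delta'[OF fin])
        also have "\<dots> = f y"
        proof (cases "y \<in> ?I")
          case False
          obtain a b where y: "y = (a, b)" by fastforce
          have "f (a, b) = 0"
          proof (rule ccontr)
            assume "f (a, b) \<noteq> 0"
            then have "(a, b) \<in> ?I" using f unfolding ext_tensor_def by blast
            then show False using False y by simp
          qed
          then show ?thesis using False y by simp
        qed simp
        finally show "f y = (\<Sum>x\<in>?I. (\<lambda>y. f x * delta x y)) y" by simp
      qed
      also have "\<dots> \<in> kspan ?K"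
      proof (intro M.span_sum)
        fix x assume "x \<in> ?I"
        then obtain A B where x: "x = (A, B)" "A \<subseteq> {..<n}" "card A = m" "B \<subseteq> {..<n}" "card B = n - m" by auto
        show "(\<lambda>y. f x * delta x y) \<in> kspan ?K"
          using M.span_scale[OF delta_in_span[OF assms x(2-5)], of "f x"] x(1) by simp
      qed
      finally show "f \<in> kspan ?K" .
    qed
  qed
qed

end
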